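(* Let $k$ be a positive integer, $V$ a finite-dimensional complex vector space, and $P_1,\dots,P_k$ pairwise commuting operators on $V$ each of order at most $2$ (i.e. $P_i^2=\mathrm{id}$). For $\varepsilon=(\varepsilon_1,\dots,\varepsilon_k)\in\{\pm1\}^k$ let $V_\varepsilon=\prod_{i=1}^k(1+\varepsilon_iP_i)V$. Let $A$ be an operator on $V$ commuting with $P_1,\dots,P_k$, and for $\varepsilon\in\{\pm1\}^k$ let $\mathcal E_{\varepsilon,+}$ (resp. $\mathcal E_{\varepsilon,-}$) be the multiset of positive (resp. negative) characteristic roots of $A|_{V_\varepsilon}:V_\varepsilon\to V_\varepsilon$. If the spectrum of $A$ coincides with the spectrum of $(\prod_{i\in I}P_i)A$ for every nonempty subset $I\subseteq\{1,\dots,k\}$, then $\mathcal E_{\varepsilon,+}=-\mathcal E_{\varepsilon,-}$ for every $\varepsilon\ne(1,1,\dots,1)$, and the spectrum of $A$ contains a sub-multiset of size $\dim V-\dim V_{(1,1,\dots,1)}$ which is symmetric about the origin.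
   Context: The spectrum of an operator is its multiset of characteristic roots (eigenvalues with algebraic multiplicity). A multiset $M$ of complex numbers is symmetric about the origin if $M=-M$. *)

theory Defs
  imports "Jordan_Normal_Form.DL_Rank" "Jordan_Normal_Form.Char_Poly" "HOL-Computational_Algebra.Polynomial"
begin

text \<open>Operators on V = C^n are represented by n x n complex matrices.\<close>

definition mat_prod_list :: "nat \<Rightarrow> complex mat list \<Rightarrow> complex mat" where
  "mat_prod_list n Ms = foldr (*) Ms (1\<^sub>m n)"

definition mat_prod_set :: "nat \<Rightarrow> (nat \<Rightarrow> complex mat) \<Rightarrow> nat set \<Rightarrow> complex mat" where
  "mat_prod_set n P I = mat_prod_list n (map P (sorted_list_of_set I))"

definition spectrum_mset :: "complex mat \<Rightarrow> complex multiset" where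
  "spectrum_mset A = proots (char_poly A)"

text \<open>The operator prod_i (1 + eps_i P_i), for eps :: nat => int with values in {1,-1}.\<close>
definition eps_op :: "nat \<Rightarrow> nat \<Rightarrow> (nat \<Rightarrow> complex mat) \<Rightarrow> (nat \<Rightarrow> int) \<Rightarrow> complex mat" where
  "eps_op n k P eps = mat_prod_list n (map (\<lambda>i. 1\<^sub>m n + of_int (eps i) \<cdot>\<^sub>m P i) [0..<k])"

definition eps_space :: "nat \<Rightarrow> nat \<Rightarrow> (nat \<Rightarrow> complex mat) \<Rightarrow> (nat \<Rightarrow> int) \<Rightarrow> complex vec set" where
  "eps_space n k P eps = {eps_op n k P eps *\<^sub>v w | w. w \<in> carrier_vec n}"

definition col_dim :: "nat \<Rightarrow> complex mat \<Rightarrow> nat" where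
  "col_dim n M = vec_space.rank n (M :: complex mat)"

text \<open>A matrix representation of the restriction of A to an A-invariant subspace W of C^n:
  an m x m matrix B such that A S = S B, where the columns of the n x m matrix S form a basis of W
  (S injective and its image is W).\<close>
definition restr_rep :: "nat \<Rightarrow> complex mat \<Rightarrow> complex vec set \<Rightarrow> complex mat \<Rightarrow> bool" where
  "restr_rep n A W B \<longleftrightarrow> (\<exists>m S. S \<in> carrier_mat n m \<and> B \<in> carrier_mat m m \<and>
      (\<forall>x \<in> carrier_vec m. S *\<^sub>v x = 0\<^sub>v n \<longrightarrow> x = 0\<^sub>v m) \<and>
      W = {S *\<^sub>v x | x. x \<in> carrier_vec m} \<and> A * S = S * B)"

definition restr_char_poly :: "nat \<Rightarrow> complex mat \<Rightarrow> complex vec set \<Rightarrow> complex poly" where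
  "restr_char_poly n A W = char_poly (SOME B. restr_rep n A W B)"

definition pos_roots :: "complex multiset \<Rightarrow> complex multiset" where
  "pos_roots M = filter_mset (\<lambda>z. z \<in> \<real> \<and> Re z > 0) M"

definition neg_roots :: "complex multiset \<Rightarrow> complex multiset" where
  "neg_roots M = filter_mset (\<lambda>z. z \<in> \<real> \<and> Re z < 0) M"

end

theory Submission
  imports Defs "Jordan_Normal_Form.Schur_Decomposition"
begin

definition tr :: "'a::comm_ring_1 mat \<Rightarrow> 'a" where
  "tr M = (\<Sum>i\<in>{0..<dim_row M}. M $$ (i,i))"

lemma tr_comm:
  fixes A B :: "'a::comm_ring_1 mat"
  assumes A: "A \<in> carrier_mat n m" and B: "B \<in> carrier_mat m n"
  shows "tr (A * B) = tr (B * A)"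
proof -
  have "tr (A * B) = (\<Sum>i\<in>{0..<n}. \<Sum>l\<in>{0..<m}. A $$ (i,l) * B $$ (l,i))"
    using A B by (simp add: tr_def scalar_prod_def)
  also have "\<dots> = (\<Sum>l\<in>{0..<m}. \<Sum>i\<in>{0..<n}. B $$ (l,i) * A $$ (i,l))"
    by (subst sum.swap) (simp add: mult.commute)
  also have "\<dots> = tr (B * A)"
    using A B by (simp add: tr_def scalar_prod_def)
  finally show ?thesis .
qed

lemma tr_smult: "M \<in> carrier_mat n n \<Longrightarrow> tr (c \<cdot>\<^sub>m M) = c * tr M"
  by (simp add: tr_def sum_distrib_left)

lemma tr_one: "tr (1\<^sub>m n :: 'a::comm_ring_1 mat) = of_nat n"
  by (simp add: tr_def)

lemma mat_eq_by_vec: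
  assumes A: "A \<in> carrier_mat n m" and B: "B \<in> carrier_mat n m"
    and eq: "\<And>v. v \<in> carrier_vec m \<Longrightarrow> A *\<^sub>v v = B *\<^sub>v v"
  shows "A = (B :: 'a::semiring_1 mat)"
proof (rule eq_matI)
  fix i j assume i: "i < dim_row B" and j: "j < dim_col B"
  have "(A *\<^sub>v unit_vec m j) $ i = (B *\<^sub>v unit_vec m j) $ i" using eq[of "unit_vec m j"] by simp
  then show "A $$ (i,j) = B $$ (i,j)" using A B i j by simp
qed (use A B in auto)

lemma factor_through:
  fixes S M :: "'a::comm_ring_1 mat"
  assumes S: "S \<in> carrier_mat n m" and M: "M \<in> carrier_mat n p"
    and ex: "\<And>j. j < p \<Longrightarrow> \<exists>x\<in>carrier_vec m. M *\<^sub>v unit_vec p j = S *\<^sub>v x"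
  shows "\<exists>X\<in>carrier_mat m p. M = S * X"
proof -
  from ex have "\<forall>j. \<exists>x. j < p \<longrightarrow> x \<in> carrier_vec m \<and> M *\<^sub>v unit_vec p j = S *\<^sub>v x" by blast
  then obtain g where g: "\<And>j. j < p \<Longrightarrow> g j \<in> carrier_vec m \<and> M *\<^sub>v unit_vec p j = S *\<^sub>v g j"
    by metis
  define X where "X = mat m p (\<lambda>(i,j). g j $ i)"
  have X: "X \<in> carrier_mat m p" unfolding X_def by simp
  have colX: "col X j = g j" if "j < p" for j
    using g[OF that] that unfolding X_def by (auto simp: col_def)
  have "M = S * X"
  proof (rule eq_matI)
    fix i j assume i: "i < dim_row (S * X)" and j: "j < dim_col (S * X)"
    then have i': "i < n" and j': "j < p" using S X by auto
    have "(S * X) $$ (i,j) = row S i \<bullet> g j" using i j colX[OF j'] by simp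
    also have "\<dots> = (S *\<^sub>v g j) $ i" using i' S by simp
    also have "\<dots> = (M *\<^sub>v unit_vec p j) $ i" using g[OF j'] by simp
    also have "\<dots> = M $$ (i,j)" using M i' j' by simp
    finally show "M $$ (i,j) = (S * X) $$ (i,j)" by simp
  qed (use S M X in auto)
  with X show ?thesis by blast
qed

definition inj_mat :: "nat \<Rightarrow> nat \<Rightarrow> 'a::ring_1 mat \<Rightarrow> bool" where
  "inj_mat n m S \<longleftrightarrow> (\<forall>x\<in>carrier_vec m. S *\<^sub>v x = 0\<^sub>v n \<longrightarrow> x = 0\<^sub>v m)"

lemma inj_mat_vec:
  fixes S :: "'a::comm_ring_1 mat"
  assumes S: "S \<in> carrier_mat n m" and inj: "inj_mat n m S"
    and x: "x \<in> carrier_vec m" and y: "y \<in> carrier_vec m" and eq: "S *\<^sub>v x = S *\<^sub>v y"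
  shows "x = y"
proof -
  have "S *\<^sub>v (x - y) = S *\<^sub>v x - S *\<^sub>v y" using S x y by (simp add: mult_minus_distrib_mat_vec)
  also have "\<dots> = 0\<^sub>v n" using eq S y by (auto intro!: eq_vecI)
  finally have "x - y = 0\<^sub>v m" using inj x y unfolding inj_mat_def by auto
  then show ?thesis using x y
    by (metis (no_types, lifting) carrier_vecD eq_vecI index_minus_vec(1) index_zero_vec(1) right_minus_eq)
qed

lemma inj_mat_cancel:
  fixes S :: "'a::comm_ring_1 mat"
  assumes S: "S \<in> carrier_mat n m" and inj: "inj_mat n m S"
    and X: "X \<in> carrier_mat m p" and Y: "Y \<in> carrier_mat m p" and eq: "S * X = S * Y"
  shows "X = Y"
proof (rule mat_eq_by_vec[OF X Y])
  fix v :: "'a vec" assume v: "v \<in> carrier_vec p"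
  have "S *\<^sub>v (X *\<^sub>v v) = (S * X) *\<^sub>v v" using S X v by simp
  also have "\<dots> = S *\<^sub>v (Y *\<^sub>v v)" using S Y v eq by simp
  finally show "X *\<^sub>v v = Y *\<^sub>v v" using inj_mat_vec[OF S inj] X Y v by auto
qed

lemma smult_mat_vec: "A \<in> carrier_mat nr nc \<Longrightarrow> v \<in> carrier_vec nc \<Longrightarrow>
   (c \<cdot>\<^sub>m A) *\<^sub>v v = c \<cdot>\<^sub>v (A *\<^sub>v (v :: 'a::comm_ring_1 vec))"
  by (rule eq_vecI) (auto simp: scalar_prod_def sum_distrib_left ac_simps)

lemma pow_mat_mult_comm:
  fixes C S B :: "'a::comm_ring_1 mat"
  assumes C: "C \<in> carrier_mat n n" and S: "S \<in> carrier_mat n m" and B: "B \<in> carrier_mat m m"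
    and CS: "C * S = S * B"
  shows "C ^\<^sub>m j * S = S * B ^\<^sub>m j"
proof (induction j)
  case 0
  then show ?case using C S B by simp
next
  case (Suc j)
  have "C ^\<^sub>m Suc j * S = C ^\<^sub>m j * (C * S)" using C S by (simp add: assoc_mult_mat[of _ n n _ n _ m])
  also have "\<dots> = (C ^\<^sub>m j * S) * B" using C S B CS by (simp add: assoc_mult_mat[of _ n n _ m _ m])
  also have "\<dots> = S * (B ^\<^sub>m j * B)" using Suc S B by (simp add: assoc_mult_mat[of _ n m _ m _ m])
  finally show ?case by simp
qed

lemma trace_block:
  fixes F S C B :: "complex mat"
  assumes F: "F \<in> carrier_mat n n" and FF: "F * F = c \<cdot>\<^sub>m F"
    and S: "S \<in> carrier_mat n m" and inj: "inj_mat n m S"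
    and img: "{S *\<^sub>v x | x. x \<in> carrier_vec m} = {F *\<^sub>v w | w. w \<in> carrier_vec n}"
    and C: "C \<in> carrier_mat n n" and B: "B \<in> carrier_mat m m" and CS: "C * S = S * B"
  shows "tr (C ^\<^sub>m j * F) = c * tr (B ^\<^sub>m j)"
proof -
  have "\<exists>x\<in>carrier_vec m. F *\<^sub>v unit_vec n i = S *\<^sub>v x" for i
  proof -
    have "F *\<^sub>v unit_vec n i \<in> {F *\<^sub>v w | w. w \<in> carrier_vec n}" by auto
    then show ?thesis unfolding img[symmetric] by auto
  qed
  then obtain R where R: "R \<in> carrier_mat m n" and FSR: "F = S * R"
    using factor_through[OF S F] by blast
  have FS: "F * S = c \<cdot>\<^sub>m S"
  proof (rule mat_eq_by_vec)
    show "F * S \<in> carrier_mat n m" "c \<cdot>\<^sub>m S \<in> carrier_mat n m" using F S by auto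
    fix v :: "complex vec" assume v: "v \<in> carrier_vec m"
    have "S *\<^sub>v v \<in> {F *\<^sub>v w | w. w \<in> carrier_vec n}" unfolding img[symmetric] using v by auto
    then obtain w where w: "w \<in> carrier_vec n" and Sv: "S *\<^sub>v v = F *\<^sub>v w" by auto
    have "(F * S) *\<^sub>v v = F *\<^sub>v (F *\<^sub>v w)" using F S v Sv by simp
    also have "\<dots> = (F * F) *\<^sub>v w" using F w by simp
    also have "\<dots> = c \<cdot>\<^sub>v (S *\<^sub>v v)" unfolding FF smult_mat_vec[OF F w] Sv ..
    also have "\<dots> = (c \<cdot>\<^sub>m S) *\<^sub>v v" unfolding smult_mat_vec[OF S v] ..
    finally show "(F * S) *\<^sub>v v = (c \<cdot>\<^sub>m S) *\<^sub>v v" .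
  qed
  have "S * (R * S) = S * (c \<cdot>\<^sub>m 1\<^sub>m m)"
  proof -
    have "S * (R * S) = (S * R) * S" using S R by simp
    also have "\<dots> = c \<cdot>\<^sub>m S" using FSR FS by simp
    also have "\<dots> = S * (c \<cdot>\<^sub>m 1\<^sub>m m)" using S by (simp add: mult_smult_distrib[of S n m _ m])
    finally show ?thesis .
  qed
  note eq = this
  have RS: "R * S = c \<cdot>\<^sub>m 1\<^sub>m m"
    by (rule inj_mat_cancel[OF S inj _ _ eq]) (use R S in auto)
  have CjS: "C ^\<^sub>m j * S = S * B ^\<^sub>m j" by (rule pow_mat_mult_comm[OF C S B CS])
  have Cj: "C ^\<^sub>m j \<in> carrier_mat n n" and Bj: "B ^\<^sub>m j \<in> carrier_mat m m" using C B by auto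
  have "tr (C ^\<^sub>m j * F) = tr ((C ^\<^sub>m j * S) * R)" unfolding FSR using Cj S R by simp
  also have "\<dots> = tr (R * (C ^\<^sub>m j * S))" using Cj S R by (intro tr_comm) auto
  also have "\<dots> = tr ((R * S) * B ^\<^sub>m j)" unfolding CjS using R S Bj by simp
  also have "\<dots> = tr (c \<cdot>\<^sub>m B ^\<^sub>m j)" unfolding RS using Bj by (simp add: mult_smult_assoc_mat[of "1\<^sub>m m" m m _ m] left_mult_one_mat[OF Bj])
  also have "\<dots> = c * tr (B ^\<^sub>m j)" using Bj by (rule tr_smult)
  finally show ?thesis .
qed

lemma proots_lin_prod: "proots (\<Prod>a\<leftarrow>xs. [:- a, 1:]) = mset (xs :: complex list)"
proof (induction xs)
  case Nil
  then show ?case by simp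
next
  case (Cons a xs)
  have "[:- a, 1:] \<noteq> (0::complex poly)" for a by simp
  then have nz: "(\<Prod>a\<leftarrow>xs. [:- a, 1:]) \<noteq> (0 :: complex poly)"
    by (auto simp: prod_list_zero_iff)
  have e: "(\<Prod>a\<leftarrow>a#xs. [:- a, 1:]) = [:- a, 1:] * (\<Prod>a\<leftarrow>xs. [:- a, 1:])" by simp
  have "proots ([:- a, 1:] * (\<Prod>a\<leftarrow>xs. [:- a, 1:])) = proots [:- a, 1:] + proots (\<Prod>a\<leftarrow>xs. [:- a, 1:])"
    by (rule proots_mult) (use nz in simp_all)
  also have "proots [:- a, 1:] = {#a#}" using proots_linear_factor[of "-a"] by simp
  finally show ?case unfolding e using Cons.IH by simp
qed

lemma upper_triangular_pow:
  fixes B :: "'a::comm_ring_1 mat"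
  assumes B: "B \<in> carrier_mat n n" and ut: "upper_triangular B"
  shows "upper_triangular (B ^\<^sub>m j) \<and> (\<forall>i<n. (B ^\<^sub>m j) $$ (i,i) = B $$ (i,i) ^ j)"
proof (induction j)
  case 0
  then show ?case using B by (auto simp: upper_triangular_def)
next
  case (Suc j)
  let ?X = "B ^\<^sub>m j"
  have X: "?X \<in> carrier_mat n n" using B by simp
  have utX: "\<And>i l. i < n \<Longrightarrow> l < i \<Longrightarrow> ?X $$ (i,l) = 0"
    using Suc X B unfolding upper_triangular_def by (metis carrier_matD(1) pow_mat_dim(1))
  have utB: "\<And>i l. i < n \<Longrightarrow> l < i \<Longrightarrow> B $$ (i,l) = 0" using ut B unfolding upper_triangular_def by auto
  have entry: "(?X * B) $$ (i,l) = (\<Sum>t\<in>{0..<n}. ?X $$ (i,t) * B $$ (t,l))" if "i < n" "l < n" for i l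
    using that X B by (simp add: scalar_prod_def)
  have "upper_triangular (?X * B)"
    unfolding upper_triangular_def
  proof (intro allI impI)
    fix i l assume i: "i < dim_row (?X * B)" and l: "l < i"
    have i': "i < n" using i B by simp
    have "(\<Sum>t\<in>{0..<n}. ?X $$ (i,t) * B $$ (t,l)) = 0"
    proof (rule sum.neutral, intro ballI)
      fix t assume t: "t \<in> {0..<n}"
      show "?X $$ (i,t) * B $$ (t,l) = 0"
      proof (cases "t < i")
        case True then show ?thesis using utX[OF i'] by simp
      next
        case False then have "l < t" using l by simp
        then show ?thesis using utB t by simp
      qed
    qed
    then show "(?X * B) $$ (i,l) = 0" using entry[OF i'] l i' by simp
  qed
  moreover have "(?X * B) $$ (i,i) = B $$ (i,i) ^ Suc j" if i: "i < n" for i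
  proof -
    have "(\<Sum>t\<in>{0..<n}. ?X $$ (i,t) * B $$ (t,i)) = ?X $$ (i,i) * B $$ (i,i)
       + (\<Sum>t\<in>{0..<n} - {i}. ?X $$ (i,t) * B $$ (t,i))"
      by (rule sum.remove) (use i in auto)
    also have "(\<Sum>t\<in>{0..<n} - {i}. ?X $$ (i,t) * B $$ (t,i)) = 0"
    proof (rule sum.neutral, intro ballI)
      fix t assume t: "t \<in> {0..<n} - {i}"
      show "?X $$ (i,t) * B $$ (t,i) = 0"
      proof (cases "t < i")
        case True then show ?thesis using utX[OF i] by simp
      next
        case False then have "i < t" using t by auto
        then show ?thesis using utB t by simp
      qed
    qed
    finally show ?thesis using entry[OF i i] Suc i by simp
  qed
  ultimately show ?case by simp
qed

lemma tr_pow_spec: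
  fixes M :: "complex mat"
  assumes M: "M \<in> carrier_mat n n"
  shows "tr (M ^\<^sub>m j) = (\<Sum>z\<in>#spectrum_mset M. z ^ j)"
proof -
  obtain as where cp: "char_poly M = (\<Prod>a\<leftarrow>as. [:- a, 1:])" and len: "length as = n"
    using char_poly_factorized[OF M] by blast
  define T where "T = schur_upper_triangular M as"
  have T: "T \<in> carrier_mat n n" and ut: "upper_triangular T" and sim: "similar_mat M T"
    using schur_upper_triangular[OF M cp] unfolding T_def by auto
  have "spectrum_mset M = proots (char_poly T)"
    unfolding spectrum_mset_def using char_poly_similar[OF sim] by simp
  also have "char_poly T = (\<Prod>a\<leftarrow>diag_mat T. [:- a, 1:])"
    by (rule char_poly_upper_triangular[OF T ut])
  finally have spec: "spectrum_mset M = mset (diag_mat T)" by (simp add: proots_lin_prod)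
  from sim obtain P Q where wit: "similar_mat_wit M T P Q" unfolding similar_mat_def by blast
  have PQ: "P \<in> carrier_mat n n" "Q \<in> carrier_mat n n" "Q * P = 1\<^sub>m n"
    using similar_mat_witD2[OF M wit] by auto
  have Bj: "T ^\<^sub>m j \<in> carrier_mat n n" using T by simp
  have "tr (M ^\<^sub>m j) = tr (P * T ^\<^sub>m j * Q)" using similar_mat_wit_pow_id[OF wit] by simp
  also have "\<dots> = tr (Q * (P * T ^\<^sub>m j))" using PQ Bj by (intro tr_comm) auto
  also have "\<dots> = tr (T ^\<^sub>m j)" using PQ Bj by (simp add: assoc_mult_mat[of Q n n P n _ n, symmetric] left_mult_one_mat[OF Bj])
  also have "\<dots> = (\<Sum>i\<in>{0..<n}. T $$ (i,i) ^ j)"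
    using upper_triangular_pow[OF T ut, of j] T unfolding tr_def by simp
  also have "\<dots> = (\<Sum>z\<in>#spectrum_mset M. z ^ j)"
    unfolding spec diag_mat_def using T by (simp add: multiset.map_comp comp_def sum_unfold_sum_mset)
  finally show ?thesis .
qed

lemma sum_mset_sum_swap:
  "(\<Sum>x\<in>#M. \<Sum>i\<in>A. f i x) = (\<Sum>i\<in>A. \<Sum>x\<in>#M. f i x)"
  by (induction M) (auto simp: sum.distrib)

lemma psum_eq_imp_eq:
  fixes M N :: "complex multiset"
  assumes ps: "\<And>j. (\<Sum>z\<in>#M. z ^ j) = (\<Sum>z\<in>#N. z ^ j)"
  shows "M = N"
proof (rule multiset_eqI)
  fix z
  define W where "W = (set_mset M \<union> set_mset N) - {z}"
  define p where "p = (\<Prod>w\<in>W. [:- w, 1:])"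
  have finW: "finite W" unfolding W_def by simp
  have polyp: "poly p x = (\<Prod>w\<in>W. x - w)" for x unfolding p_def by (simp add: poly_prod)
  have pz: "poly p z \<noteq> 0" unfolding polyp using finW by (simp add: W_def)
  have px: "poly p x = 0" if "x \<in> W" for x unfolding polyp using finW that by (auto intro: prod_zero)
  have gen: "(\<Sum>x\<in>#K. poly p x) = (\<Sum>i\<le>degree p. coeff p i * (\<Sum>x\<in>#K. x ^ i))" for K :: "complex multiset"
    unfolding poly_altdef by (induction K) (simp_all add: sum.distrib distrib_left)
  have cnt: "(\<Sum>x\<in>#K. poly p x) = of_nat (count K z) * poly p z" if "set_mset K - {z} \<subseteq> W" for K
  proof -
    have "K = filter_mset (\<lambda>x. x = z) K + filter_mset (\<lambda>x. x \<noteq> z) K" by (simp add: multiset_partition)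
    then have "(\<Sum>x\<in>#K. poly p x) = (\<Sum>x\<in>#filter_mset (\<lambda>x. x = z) K. poly p x) + (\<Sum>x\<in>#filter_mset (\<lambda>x. x \<noteq> z) K. poly p x)"
      by (metis image_mset_union sum_mset.union)
    also have "(\<Sum>x\<in>#filter_mset (\<lambda>x. x \<noteq> z) K. poly p x) = 0"
      using that px by (intro sum_mset.neutral) auto
    also have "(\<Sum>x\<in>#filter_mset (\<lambda>x. x = z) K. poly p x) = of_nat (count K z) * poly p z"
      by (simp add: filter_eq_replicate_mset)
    finally show ?thesis by simp
  qed
  have s1: "set_mset M - {z} \<subseteq> W" "set_mset N - {z} \<subseteq> W" unfolding W_def by auto
  have "(\<Sum>x\<in>#M. poly p x) = (\<Sum>x\<in>#N. poly p x)" unfolding gen ps ..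
  then have "of_nat (count M z) * poly p z = of_nat (count N z) * poly p z"
    using cnt[OF s1(1)] cnt[OF s1(2)] by simp
  then show "count M z = count N z" using pz by simp
qed

lemma mpl_Nil: "mat_prod_list n [] = 1\<^sub>m n" by (simp add: mat_prod_list_def)
lemma mpl_Cons: "mat_prod_list n (M # Ms) = M * mat_prod_list n Ms" by (simp add: mat_prod_list_def)

lemma mpl_carrier: "(\<forall>M\<in>set Ms. M \<in> carrier_mat n n) \<Longrightarrow> mat_prod_list n Ms \<in> carrier_mat n n"
  by (induction Ms) (auto simp: mat_prod_list_def)

lemma mpl_append:
  assumes "\<forall>M\<in>set Ms. M \<in> carrier_mat n n" "\<forall>M\<in>set Ns. M \<in> carrier_mat n n"
  shows "mat_prod_list n (Ms @ Ns) = mat_prod_list n Ms * mat_prod_list n Ns"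
  using assms
proof (induction Ms)
  case Nil
  then show ?case using mpl_carrier[OF Nil(2)] by (simp add: mpl_Nil)
next
  case (Cons M Ms)
  have c: "mat_prod_list n Ms \<in> carrier_mat n n" "mat_prod_list n Ns \<in> carrier_mat n n" "M \<in> carrier_mat n n"
    using mpl_carrier Cons.prems by auto
  show ?case using Cons c by (simp add: mpl_Cons)
qed

lemma mpl_comm:
  assumes C: "C \<in> carrier_mat n n" and Ms: "\<forall>M\<in>set Ms. M \<in> carrier_mat n n \<and> C * M = M * C"
  shows "C * mat_prod_list n Ms = mat_prod_list n Ms * C"
  using Ms
proof (induction Ms)
  case Nil
  then show ?case using C by (simp add: mpl_Nil)
next
  case (Cons M Ms)
  have R: "mat_prod_list n Ms \<in> carrier_mat n n" using mpl_carrier Cons.prems by auto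
  have M: "M \<in> carrier_mat n n" "C * M = M * C" using Cons.prems by auto
  have "C * (M * mat_prod_list n Ms) = (C * M) * mat_prod_list n Ms" using C M(1) R by simp
  also have "\<dots> = (M * C) * mat_prod_list n Ms" using M by simp
  also have "\<dots> = M * (C * mat_prod_list n Ms)" using C M(1) R by simp
  also have "\<dots> = M * (mat_prod_list n Ms * C)" using Cons by simp
  also have "\<dots> = (M * mat_prod_list n Ms) * C" using C M(1) R by simp
  finally show ?case by (simp add: mpl_Cons)
qed

lemma smult_smult_mat: "a \<cdot>\<^sub>m (b \<cdot>\<^sub>m X) = (a * b :: 'a::comm_ring_1) \<cdot>\<^sub>m X"
  by (rule eq_matI) auto

lemma smult_one_mat[simp]: "(1::'a::comm_ring_1) \<cdot>\<^sub>m X = X"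
  by (rule eq_matI) auto

lemma mpl_eig:
  fixes P :: "complex mat"
  assumes P: "P \<in> carrier_mat n n"
    and fx: "\<forall>x\<in>set xs. f x \<in> carrier_mat n n \<and> P * f x = f x * P"
    and i: "i \<in> set xs" and Pi: "P * f i = c \<cdot>\<^sub>m f i"
  shows "P * mat_prod_list n (map f xs) = c \<cdot>\<^sub>m mat_prod_list n (map f xs)"
  using fx i
proof (induction xs)
  case Nil
  then show ?case by simp
next
  case (Cons x xs)
  have R: "mat_prod_list n (map f xs) \<in> carrier_mat n n" using mpl_carrier Cons.prems by auto
  have M: "f x \<in> carrier_mat n n" "P * f x = f x * P" using Cons.prems by auto
  show ?case
  proof (cases "x = i")
    case True
    have "P * (f x * mat_prod_list n (map f xs)) = (P * f x) * mat_prod_list n (map f xs)" using P M(1) R by simp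
    also have "\<dots> = c \<cdot>\<^sub>m (f x * mat_prod_list n (map f xs))" using True Pi M(1) R by (simp add: mult_smult_assoc_mat)
    finally show ?thesis by (simp add: mpl_Cons)
  next
    case False
    then have i': "i \<in> set xs" using Cons.prems by auto
    have "P * (f x * mat_prod_list n (map f xs)) = (P * f x) * mat_prod_list n (map f xs)" using P M(1) R by simp
    also have "\<dots> = (f x * P) * mat_prod_list n (map f xs)" using M by simp
    also have "\<dots> = f x * (P * mat_prod_list n (map f xs))" using P M(1) R by simp
    also have "\<dots> = f x * (c \<cdot>\<^sub>m mat_prod_list n (map f xs))" using Cons.IH Cons.prems i' by simp
    also have "\<dots> = c \<cdot>\<^sub>m (f x * mat_prod_list n (map f xs))" using M R by (simp add: mult_smult_distrib)
    finally show ?thesis by (simp add: mpl_Cons)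
  qed
qed

lemma mpl_right:
  fixes X :: "complex mat"
  assumes X: "X \<in> carrier_mat n n"
    and fx: "\<forall>x\<in>set xs. f x \<in> carrier_mat n n \<and> X * f x = c \<cdot>\<^sub>m X"
  shows "X * mat_prod_list n (map f xs) = c ^ length xs \<cdot>\<^sub>m X"
  using fx
proof (induction xs)
  case Nil
  then show ?case using X by (simp add: mpl_Nil)
next
  case (Cons x xs)
  have R: "mat_prod_list n (map f xs) \<in> carrier_mat n n" using mpl_carrier Cons.prems by auto
  have M: "f x \<in> carrier_mat n n" "X * f x = c \<cdot>\<^sub>m X" using Cons.prems by auto
  have "X * (f x * mat_prod_list n (map f xs)) = (X * f x) * mat_prod_list n (map f xs)" using X M(1) R by simp
  also have "\<dots> = c \<cdot>\<^sub>m (X * mat_prod_list n (map f xs))" using M X R by (simp add: mult_smult_assoc_mat)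
  also have "\<dots> = c ^ length (x # xs) \<cdot>\<^sub>m X" using Cons by (simp add: smult_smult_mat)
  finally show ?case by (simp add: mpl_Cons)
qed

lemma mpl_left:
  fixes F :: "complex mat"
  assumes F: "F \<in> carrier_mat n n"
    and fx: "\<forall>x\<in>set xs. f x \<in> carrier_mat n n \<and> f x * F = c x \<cdot>\<^sub>m F"
  shows "mat_prod_list n (map f xs) * F = (\<Prod>x\<leftarrow>xs. c x) \<cdot>\<^sub>m F"
  using fx
proof (induction xs)
  case Nil
  then show ?case using F by (simp add: mpl_Nil)
next
  case (Cons x xs)
  have R: "mat_prod_list n (map f xs) \<in> carrier_mat n n" using mpl_carrier Cons.prems by auto
  have M: "f x \<in> carrier_mat n n" "f x * F = c x \<cdot>\<^sub>m F" using Cons.prems by auto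
  have "(f x * mat_prod_list n (map f xs)) * F = f x * (mat_prod_list n (map f xs) * F)" using F M(1) R by simp
  also have "\<dots> = f x * ((\<Prod>x\<leftarrow>xs. c x) \<cdot>\<^sub>m F)" using Cons by simp
  also have "\<dots> = (\<Prod>x\<leftarrow>xs. c x) \<cdot>\<^sub>m (c x \<cdot>\<^sub>m F)" using M F by (simp add: mult_smult_distrib)
  also have "\<dots> = (\<Prod>x\<leftarrow>x # xs. c x) \<cdot>\<^sub>m F" by (simp add: smult_smult_mat ac_simps)
  finally show ?case by (simp add: mpl_Cons)
qed

definition Mop :: "nat \<Rightarrow> (nat \<Rightarrow> complex mat) \<Rightarrow> (nat \<Rightarrow> int) \<Rightarrow> nat \<Rightarrow> complex mat" where
  "Mop n P e i = 1\<^sub>m n + of_int (e i) \<cdot>\<^sub>m P i"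

lemma eps_op_Mop: "eps_op n k P e = mat_prod_list n (map (Mop n P e) [0..<k])"
  unfolding eps_op_def Mop_def ..

lemma Mop_carrier: "P i \<in> carrier_mat n n \<Longrightarrow> Mop n P e i \<in> carrier_mat n n"
  unfolding Mop_def by simp

lemma Mop_right: assumes G: "G \<in> carrier_mat n n" and P: "P i \<in> carrier_mat n n"
  shows "G * Mop n P e i = G + of_int (e i) \<cdot>\<^sub>m (G * P i)"
proof -
  have "G * (1\<^sub>m n + of_int (e i) \<cdot>\<^sub>m P i) = G * 1\<^sub>m n + G * (of_int (e i) \<cdot>\<^sub>m P i)"
    by (rule mult_add_distrib_mat[OF G]) (use P in auto)
  then show ?thesis unfolding Mop_def using G P by (simp add: mult_smult_distrib)
qed

lemma Mop_left: assumes G: "G \<in> carrier_mat n n" and P: "P i \<in> carrier_mat n n"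
  shows "Mop n P e i * G = G + of_int (e i) \<cdot>\<^sub>m (P i * G)"
proof -
  have "(1\<^sub>m n + of_int (e i) \<cdot>\<^sub>m P i) * G = 1\<^sub>m n * G + (of_int (e i) \<cdot>\<^sub>m P i) * G"
    by (rule add_mult_distrib_mat[OF _ _ G]) (use P in auto)
  then show ?thesis unfolding Mop_def using G P by (simp add: mult_smult_assoc_mat)
qed

lemma eps_op_cong: "(\<And>i. i < k \<Longrightarrow> e i = e' i) \<Longrightarrow> eps_op n k P e = eps_op n k P e'"
  unfolding eps_op_def by (intro arg_cong[where f = "mat_prod_list n"]) auto

lemma eps_op_Suc:
  assumes "\<And>i. i \<le> k \<Longrightarrow> P i \<in> carrier_mat n n"
  shows "eps_op n (Suc k) P e = eps_op n k P e * Mop n P e k"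
proof -
  have c: "Mop n P e k \<in> carrier_mat n n" using assms Mop_carrier by auto
  have "eps_op n (Suc k) P e = mat_prod_list n (map (Mop n P e) [0..<k] @ [Mop n P e k])"
    unfolding eps_op_Mop by simp
  also have "\<dots> = eps_op n k P e * mat_prod_list n [Mop n P e k]"
    unfolding eps_op_Mop by (rule mpl_append) (use assms Mop_carrier in auto)
  also have "mat_prod_list n [Mop n P e k] = Mop n P e k" using c by (simp add: mpl_Cons mpl_Nil)
  finally show ?thesis .
qed

definition sgnJ :: "nat set \<Rightarrow> nat \<Rightarrow> int" where
  "sgnJ J i = (if i \<in> J then -1 else 1)"

lemma eps_op_sum:
  assumes P: "\<And>i. i < k \<Longrightarrow> P i \<in> carrier_mat n n" and a: "a < n" and b: "b < n"
  shows "(\<Sum>J\<in>Pow {0..<k}. eps_op n k P (sgnJ J) $$ (a,b)) = (if a = b then 2 ^ k else 0)"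
  using P
proof (induction k)
  case 0
  then show ?case using a b by (simp add: eps_op_def mat_prod_list_def)
next
  case (Suc k)
  have Pk: "\<And>i. i \<le> k \<Longrightarrow> P i \<in> carrier_mat n n" using Suc.prems by auto
  have Pk': "P k \<in> carrier_mat n n" using Pk by auto
  have G: "eps_op n k P e \<in> carrier_mat n n" for e
    unfolding eps_op_Mop by (rule mpl_carrier) (use Pk Mop_carrier in auto)
  have split: "Pow {0..<Suc k} = Pow {0..<k} \<union> insert k ` Pow {0..<k}"
    by (simp add: atLeast0_lessThan_Suc Pow_insert)
  have disj: "Pow {0..<k} \<inter> insert k ` Pow {0..<k} = {}" by auto
  have inj: "inj_on (insert k) (Pow {0..<k})"
    by (rule inj_onI) (metis Diff_insert_absorb PowD atLeastLessThan_iff less_irrefl subsetD)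
  have same: "eps_op n k P (sgnJ (insert k J)) = eps_op n k P (sgnJ J)" if "J \<in> Pow {0..<k}" for J
    by (rule eps_op_cong) (auto simp: sgnJ_def)
  have tm: "eps_op n (Suc k) P (sgnJ J) $$ (a,b) + eps_op n (Suc k) P (sgnJ (insert k J)) $$ (a,b)
      = 2 * eps_op n k P (sgnJ J) $$ (a,b)" if J: "J \<in> Pow {0..<k}" for J
  proof -
    have kJ: "k \<notin> J" using J by auto
    let ?G = "eps_op n k P (sgnJ J)"
    have "eps_op n (Suc k) P (sgnJ J) = ?G + of_int (sgnJ J k) \<cdot>\<^sub>m (?G * P k)"
    proof -
      have "eps_op n (Suc k) P (sgnJ J) = ?G * Mop n P (sgnJ J) k"
        by (rule eps_op_Suc[OF Pk])
      also have "\<dots> = ?G + of_int (sgnJ J k) \<cdot>\<^sub>m (?G * P k)"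
        by (rule Mop_right[where P=P and i=k, OF G[of "sgnJ J"] Pk'])
      finally show ?thesis .
    qed
    moreover have "eps_op n (Suc k) P (sgnJ (insert k J)) = ?G + of_int (sgnJ (insert k J) k) \<cdot>\<^sub>m (?G * P k)"
    proof -
      have "eps_op n (Suc k) P (sgnJ (insert k J)) = eps_op n k P (sgnJ (insert k J)) * Mop n P (sgnJ (insert k J)) k"
        by (rule eps_op_Suc[OF Pk])
      also have "\<dots> = eps_op n k P (sgnJ (insert k J)) + of_int (sgnJ (insert k J) k) \<cdot>\<^sub>m (eps_op n k P (sgnJ (insert k J)) * P k)"
        by (rule Mop_right[where P=P and i=k, OF G[of "sgnJ (insert k J)"] Pk'])
      finally show ?thesis unfolding same[OF J] .
    qed
    ultimately show ?thesis using kJ a b G[of "sgnJ J"] Pk' by (simp add: sgnJ_def)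
  qed
  have "(\<Sum>J\<in>Pow {0..<Suc k}. eps_op n (Suc k) P (sgnJ J) $$ (a,b))
     = (\<Sum>J\<in>Pow {0..<k}. eps_op n (Suc k) P (sgnJ J) $$ (a,b))
     + (\<Sum>J\<in>insert k ` Pow {0..<k}. eps_op n (Suc k) P (sgnJ J) $$ (a,b))"
    unfolding split by (rule sum.union_disjoint) (use disj in auto)
  also have "(\<Sum>J\<in>insert k ` Pow {0..<k}. eps_op n (Suc k) P (sgnJ J) $$ (a,b))
     = (\<Sum>J\<in>Pow {0..<k}. eps_op n (Suc k) P (sgnJ (insert k J)) $$ (a,b))"
    by (rule sum.reindex[OF inj, unfolded comp_def])
  also have "(\<Sum>J\<in>Pow {0..<k}. eps_op n (Suc k) P (sgnJ J) $$ (a,b)) + \<dots>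
     = (\<Sum>J\<in>Pow {0..<k}. 2 * eps_op n k P (sgnJ J) $$ (a,b))"
    unfolding sum.distrib[symmetric] by (rule sum.cong) (use tm in auto)
  also have "\<dots> = (if a = b then 2 ^ Suc k else 0)"
    unfolding sum_distrib_left[symmetric] using Suc.IH Suc.prems by simp
  finally show ?case .
qed

lemma (in vec_space) basis_exists:
  assumes F: "F \<in> carrier_mat n nc"
  shows "\<exists>m S. S \<in> carrier_mat n m \<and> inj_mat n m S
     \<and> {S *\<^sub>v x | x. x \<in> carrier_vec m} = {F *\<^sub>v w | w. w \<in> carrier_vec nc} \<and> m = rank F"
proof -
  let ?C = "set (cols F)"
  let ?Q = "\<lambda>T. T \<subseteq> ?C \<and> lin_indpt T"
  have C: "?C \<subseteq> carrier_vec n" using F cols_dim by blast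
  have e: "lin_indpt {}" unfolding lin_dep_def by auto
  obtain U where finU: "finite U" and maxU: "maximal U ?Q"
    using maximal_exists_superset[of ?C ?Q "{}"] e by auto
  have UC: "U \<subseteq> ?C" and liU: "lin_indpt U" using maxU unfolding maximal_def by auto
  have U: "U \<subseteq> carrier_vec n" using UC C by auto
  have rk: "rank F = card U" by (rule rank_card_indpt[OF F maxU])
  obtain us where us: "set us = U" "distinct us" using finite_distinct_list[OF finU] by blast
  define m where "m = length us"
  define S where "S = mat_of_cols n us"
  have S: "S \<in> carrier_mat n m" unfolding S_def m_def by simp
  have colsS: "cols S = us" unfolding S_def using U us by (simp add: cols_mat_of_cols)
  have m: "m = rank F" unfolding rk m_def using us distinct_card by metis
  have inj: "inj_mat n m S" unfolding inj_mat_def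
  proof (intro ballI impI)
    fix x assume x: "x \<in> carrier_vec m" and Sx: "S *\<^sub>v x = 0\<^sub>v n"
    show "x = 0\<^sub>v m"
    proof (rule ccontr)
      assume "x \<noteq> 0\<^sub>v m"
      then have "lin_dep (set (cols S))" using lin_depI[OF S x _ Sx] colsS us by auto
      then show False using liU colsS us by simp
    qed
  qed
  have spanU: "span U = span ?C"
  proof
    show "span U \<subseteq> span ?C" using UC by (rule span_is_monotone)
    have "?C \<subseteq> span U"
    proof
      fix c assume c: "c \<in> ?C"
      show "c \<in> span U"
      proof (cases "c \<in> U")
        case True then show ?thesis using in_own_span[OF U] by auto
      next
        case False
        show ?thesis
        proof (rule ccontr)
          assume "c \<notin> span U"
          then have "lin_indpt (U \<union> {c})" using lin_dep_iff_in_span[OF U liU _ False] c C by auto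
          moreover have "U \<union> {c} \<subseteq> ?C" using UC c by auto
          ultimately have "U \<union> {c} = U" using maxU unfolding maximal_def by blast
          then show False using False by auto
        qed
      qed
    qed
    then show "span ?C \<subseteq> span U" using span_is_subset span_is_submodule[OF U] by blast
  qed
  have imS: "{S *\<^sub>v x | x. x \<in> carrier_vec m} = col_space S"
    unfolding col_space_eq[OF S] using S by auto
  have imF: "{F *\<^sub>v w | w. w \<in> carrier_vec nc} = col_space F"
    unfolding col_space_eq[OF F] using F by auto
  have "col_space S = col_space F" unfolding col_space_def colsS us spanU ..
  then show ?thesis using S inj m imS imF by auto
qed

definition chi :: "nat set \<Rightarrow> nat set \<Rightarrow> int" where
  "chi I J = (\<Prod>i\<in>I. sgnJ J i)"

lemma sgnJ_sq: "sgnJ J i * sgnJ J i = 1" by (simp add: sgnJ_def)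
lemma sgnJ_cases: "sgnJ J i = 1 \<or> sgnJ J i = -1" by (simp add: sgnJ_def)

lemma chi_cases: "finite I \<Longrightarrow> chi I J = 1 \<or> chi I J = -1"
  unfolding chi_def
proof (induction I rule: finite_induct)
  case empty then show ?case by simp
next
  case (insert x F) then show ?case using sgnJ_cases[of J x] by auto
qed

lemma chi_empty: "chi {} J = 1" by (simp add: chi_def)
lemma chi_emptyJ: "chi I {} = 1" by (simp add: chi_def sgnJ_def)

lemma orth:
  assumes K: "finite K" and J0: "J0 \<subseteq> K" and J: "J \<subseteq> K"
  shows "(\<Sum>I\<in>Pow K. chi I J0 * chi I J) = (if J = J0 then 2 ^ card K else 0)"
proof -
  have "(\<Sum>I\<in>Pow K. chi I J0 * chi I J) = (\<Sum>I\<in>Pow K. (\<Prod>i\<in>I. sgnJ J0 i * sgnJ J i) * (\<Prod>i\<in>K - I. 1))"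
    unfolding chi_def by (simp add: prod.distrib)
  also have "\<dots> = (\<Prod>i\<in>K. sgnJ J0 i * sgnJ J i + 1)"
    by (rule prod_add[symmetric]) (rule K)
  also have "\<dots> = (if J = J0 then 2 ^ card K else 0)"
  proof (cases "J = J0")
    case True
    then show ?thesis by (simp add: sgnJ_sq)
  next
    case False
    then obtain i where i: "i \<in> K" "(i \<in> J) \<noteq> (i \<in> J0)" using J0 J by blast
    then have "sgnJ J0 i * sgnJ J i + 1 = 0" by (auto simp: sgnJ_def)
    then have "(\<Prod>i\<in>K. sgnJ J0 i * sgnJ J i + 1) = 0" using i K by (intro prod_zero) auto
    then show ?thesis using False by simp
  qed
  finally show ?thesis .
qed

lemma image_mset_sum_set: "image_mset f (\<Sum>x\<in>A. M x) = (\<Sum>x\<in>A. image_mset f (M x))"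
  by (induction A rule: infinite_finite_induct) auto

lemma sum_mset_sum_set: "(\<Sum>z\<in>#(\<Sum>x\<in>A. M x). g z) = (\<Sum>x\<in>A. \<Sum>z\<in>#M x. g z)"
  by (induction A rule: infinite_finite_induct) auto

lemma count_image_uminus: "count (image_mset (\<lambda>w. - w) M) (- x) = count M (x::complex)"
  by (induction M) auto

lemma count_image_sign:
  assumes c: "c = 1 \<or> c = -1"
  shows "count (image_mset (\<lambda>w. (of_int c :: complex) * w) M) z = (if c = 1 then count M z else count M (-z))"
proof (cases "c = 1")
  case True
  then show ?thesis by simp
next
  case False
  then have c': "c = -1" using c by simp
  have "count (image_mset (\<lambda>w. - w) M) z = count (image_mset (\<lambda>w. - w) M) (- (- z))" by simp
  also have "\<dots> = count M (-z)" by (rule count_image_uminus)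
  finally show ?thesis using c' by simp
qed

lemma fourier:
  fixes M :: "nat set \<Rightarrow> complex multiset" and N :: "complex multiset"
  assumes K: "finite K"
    and hyp: "\<And>I. I \<subseteq> K \<Longrightarrow> (\<Sum>J\<in>Pow K. image_mset (\<lambda>w. of_int (chi I J) * w) (M J)) = N"
    and J0: "J0 \<subseteq> K" "J0 \<noteq> {}"
  shows "count (M J0) z = count (M J0) (-z)"
proof -
  define c where "c J = int (count (M J) z)" for J
  define c' where "c' J = int (count (M J) (-z))" for J
  define d where "d J = c J - c' J" for J
  have finI: "finite I" if "I \<subseteq> K" for I using K that finite_subset by auto
  have cnt: "2 * int (count N z) = (\<Sum>J\<in>Pow K. c J + c' J) + (\<Sum>J\<in>Pow K. chi I J * d J)"
    if I: "I \<subseteq> K" for I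
  proof -
    have "int (count N z) = (\<Sum>J\<in>Pow K. int (count (image_mset (\<lambda>w. of_int (chi I J) * w) (M J)) z))"
      unfolding hyp[OF I, symmetric] by (simp add: count_sum)
    also have "\<dots> = (\<Sum>J\<in>Pow K. if chi I J = 1 then c J else c' J)"
      by (rule sum.cong) (auto simp: count_image_sign[OF chi_cases[OF finI[OF I]]] c_def c'_def)
    finally have "2 * int (count N z) = (\<Sum>J\<in>Pow K. 2 * (if chi I J = 1 then c J else c' J))"
      by (simp add: sum_distrib_left)
    also have "\<dots> = (\<Sum>J\<in>Pow K. (c J + c' J) + chi I J * d J)"
    proof (rule sum.cong)
      fix J assume "J \<in> Pow K"
      show "2 * (if chi I J = 1 then c J else c' J) = (c J + c' J) + chi I J * d J"
        using chi_cases[OF finI[OF I], of J] unfolding d_def by auto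
    qed simp
    finally show ?thesis by (simp add: sum.distrib)
  qed
  define D where "D = (\<Sum>J\<in>Pow K. chi {} J * d J)"
  have allI: "(\<Sum>J\<in>Pow K. chi I J * d J) = D" if "I \<subseteq> K" for I
    using cnt[OF that] cnt[of "{}"] unfolding D_def by simp
  have "(\<Sum>I\<in>Pow K. chi I J0 * (\<Sum>J\<in>Pow K. chi I J * d J)) = (\<Sum>I\<in>Pow K. chi I J0 * D)"
    using allI by (intro sum.cong) auto
  also have "\<dots> = D * (\<Sum>I\<in>Pow K. chi I J0 * chi I {})"
    unfolding chi_emptyJ sum_distrib_left by (simp add: mult.commute)
  also have "\<dots> = 0" using orth[OF K J0(1), of "{}"] J0 by simp
  finally have z: "(\<Sum>I\<in>Pow K. chi I J0 * (\<Sum>J\<in>Pow K. chi I J * d J)) = 0" .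
  have "(\<Sum>I\<in>Pow K. chi I J0 * (\<Sum>J\<in>Pow K. chi I J * d J)) = (\<Sum>I\<in>Pow K. \<Sum>J\<in>Pow K. d J * (chi I J0 * chi I J))"
  proof (rule sum.cong[OF refl])
    fix I
    have "chi I J0 * (\<Sum>J\<in>Pow K. chi I J * d J) = (\<Sum>J\<in>Pow K. chi I J0 * (chi I J * d J))"
      by (rule sum_distrib_left)
    also have "\<dots> = (\<Sum>J\<in>Pow K. d J * (chi I J0 * chi I J))"
      by (rule sum.cong[OF refl]) (simp only: mult_ac)
    finally show "chi I J0 * (\<Sum>J\<in>Pow K. chi I J * d J) = (\<Sum>J\<in>Pow K. d J * (chi I J0 * chi I J))" .
  qed
  also have "\<dots> = (\<Sum>J\<in>Pow K. \<Sum>I\<in>Pow K. d J * (chi I J0 * chi I J))"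
    by (rule sum.swap)
  also have "\<dots> = (\<Sum>J\<in>Pow K. d J * (\<Sum>I\<in>Pow K. chi I J0 * chi I J))"
    by (simp only: sum_distrib_left)
  also have "\<dots> = (\<Sum>J\<in>Pow K. if J = J0 then d J * 2 ^ card K else 0)"
    by (rule sum.cong) (auto simp: orth[OF K J0(1)])
  also have "\<dots> = d J0 * 2 ^ card K" using J0 K by (simp add: sum.delta)
  finally have "d J0 = 0" using z by simp
  then show ?thesis unfolding d_def c_def c'_def by simp
qed

lemma symm_pos_neg:
  assumes "\<And>z. count M z = count M (-z)"
  shows "pos_roots M = image_mset uminus (neg_roots M)"
proof (rule multiset_eqI)
  fix z :: complex
  have "count (image_mset uminus (neg_roots M)) z = count (image_mset uminus (neg_roots M)) (- (- z))" by simp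
  also have "\<dots> = count (neg_roots M) (-z)" by (rule count_image_uminus)
  also have "\<dots> = count (pos_roots M) z"
    unfolding neg_roots_def pos_roots_def using assms[of z]
    by (auto simp: Reals_minus_iff)
  finally show "count (pos_roots M) z = count (image_mset uminus (neg_roots M)) z" by simp
qed

lemma symm_image:
  assumes "\<And>z. count M z = count M (-z)"
  shows "image_mset uminus M = (M :: complex multiset)"
proof (rule multiset_eqI)
  fix z :: complex
  have "count (image_mset uminus M) z = count (image_mset uminus M) (- (- z))" by simp
  also have "\<dots> = count M (-z)" by (rule count_image_uminus)
  finally show "count (image_mset uminus M) z = count M z" using assms[of z] by simp
qed

lemma pow_mat_smult:
  fixes B :: "'a::comm_ring_1 mat"
  assumes B: "B \<in> carrier_mat m m"
  shows "(c \<cdot>\<^sub>m B) ^\<^sub>m j = c ^ j \<cdot>\<^sub>m B ^\<^sub>m j"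
proof (induction j)
  case 0
  then show ?case using B by simp
next
  case (Suc j)
  have Bj: "B ^\<^sub>m j \<in> carrier_mat m m" using B by simp
  have "(c \<cdot>\<^sub>m B) ^\<^sub>m Suc j = (c ^ j \<cdot>\<^sub>m B ^\<^sub>m j) * (c \<cdot>\<^sub>m B)" using Suc by simp
  also have "\<dots> = c ^ j \<cdot>\<^sub>m (B ^\<^sub>m j * (c \<cdot>\<^sub>m B))" by (rule mult_smult_assoc_mat) (use Bj B in auto)
  also have "\<dots> = c ^ j \<cdot>\<^sub>m (c \<cdot>\<^sub>m (B ^\<^sub>m j * B))" by (subst mult_smult_distrib[OF Bj B]) simp
  also have "\<dots> = c ^ Suc j \<cdot>\<^sub>m B ^\<^sub>m Suc j" by (simp add: smult_smult_mat ac_simps)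
  finally show ?case .
qed

lemma sum_mset_one: "(\<Sum>z\<in>#X. (1::complex)) = of_nat (size X)"
  by (induction X) auto

lemma size_spec:
  assumes M: "M \<in> carrier_mat m m"
  shows "size (spectrum_mset M) = m"
proof -
  have "tr (M ^\<^sub>m 0) = (\<Sum>z\<in>#spectrum_mset M. z ^ 0)" by (rule tr_pow_spec[OF M])
  then have "(of_nat m :: complex) = of_nat (size (spectrum_mset M))" using M by (simp add: tr_one sum_mset_one)
  then show ?thesis by (simp only: of_nat_eq_iff)
qed

locale invsys =
  fixes n k :: nat and P :: "nat \<Rightarrow> complex mat" and A :: "complex mat"
  assumes P_carrier: "\<And>i. i < k \<Longrightarrow> P i \<in> carrier_mat n n"
    and P_invol: "\<And>i. i < k \<Longrightarrow> P i * P i = 1\<^sub>m n"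
    and P_comm: "\<And>i j. i < k \<Longrightarrow> j < k \<Longrightarrow> P i * P j = P j * P i"
    and A_carrier: "A \<in> carrier_mat n n"
    and A_comm: "\<And>i. i < k \<Longrightarrow> A * P i = P i * A"
begin

lemma Mop_c: "i < k \<Longrightarrow> Mop n P e i \<in> carrier_mat n n"
  using Mop_carrier P_carrier by blast

lemma F_carrier: "eps_op n k P e \<in> carrier_mat n n"
  unfolding eps_op_Mop by (rule mpl_carrier) (auto intro: Mop_c)

lemma Mop_comm:
  assumes C: "C \<in> carrier_mat n n" and i: "i < k" and CP: "C * P i = P i * C"
  shows "C * Mop n P e i = Mop n P e i * C"
  using Mop_right[where P=P and i=i and e=e, OF C P_carrier[OF i]] Mop_left[where P=P and i=i and e=e, OF C P_carrier[OF i]] CP by simp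

lemma comm_F:
  assumes C: "C \<in> carrier_mat n n" and CP: "\<And>i. i < k \<Longrightarrow> C * P i = P i * C"
  shows "C * eps_op n k P e = eps_op n k P e * C"
  unfolding eps_op_Mop
proof (rule mpl_comm[OF C], intro ballI)
  fix M assume "M \<in> set (map (Mop n P e) [0..<k])"
  then obtain i where i: "i < k" and M: "M = Mop n P e i" by auto
  show "M \<in> carrier_mat n n \<and> C * M = M * C" using Mop_c[OF i] Mop_comm[OF C i CP[OF i]] M by simp
qed

lemma sq_inv: "a \<in> {1, -1} \<Longrightarrow> (of_int a :: complex) * (of_int a * x) = x"
  by auto

lemma P_Mop_self:
  assumes i: "i < k" and e: "e i \<in> {1, -1}"
  shows "P i * Mop n P e i = of_int (e i) \<cdot>\<^sub>m Mop n P e i"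
proof -
  have Pi: "P i \<in> carrier_mat n n" using P_carrier[OF i] .
  have "P i * Mop n P e i = P i + of_int (e i) \<cdot>\<^sub>m 1\<^sub>m n"
    using Mop_right[where P=P and i=i and e=e, OF Pi Pi] P_invol[OF i] by simp
  also have "\<dots> = of_int (e i) \<cdot>\<^sub>m Mop n P e i"
    unfolding Mop_def by (rule eq_matI) (use Pi e in auto)
  finally show ?thesis .
qed

lemma P_F:
  assumes i: "i < k" and e: "e i \<in> {1, -1}"
  shows "P i * eps_op n k P e = of_int (e i) \<cdot>\<^sub>m eps_op n k P e"
  unfolding eps_op_Mop
proof (rule mpl_eig[OF P_carrier[OF i]])
  show "\<forall>x\<in>set [0..<k]. Mop n P e x \<in> carrier_mat n n \<and> P i * Mop n P e x = Mop n P e x * P i"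
    using Mop_c Mop_comm[OF P_carrier[OF i]] P_comm i by auto
  show "i \<in> set [0..<k]" using i by simp
  show "P i * Mop n P e i = of_int (e i) \<cdot>\<^sub>m Mop n P e i" by (rule P_Mop_self[where e=e, OF i e])
qed

lemma FF:
  assumes e: "\<And>i. i < k \<Longrightarrow> e i \<in> {1, -1}"
  shows "eps_op n k P e * eps_op n k P e = 2 ^ k \<cdot>\<^sub>m eps_op n k P e"
proof -
  let ?X = "eps_op n k P e"
  have X: "?X \<in> carrier_mat n n" by (rule F_carrier)
  have step: "?X * Mop n P e i = 2 \<cdot>\<^sub>m ?X" if i: "i < k" for i
  proof -
    have "?X * P i = P i * ?X" using comm_F[OF P_carrier[OF i]] P_comm i by metis
    also have "\<dots> = of_int (e i) \<cdot>\<^sub>m ?X" by (rule P_F[where e=e, OF i e[OF i]])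
    finally have XP: "?X * P i = of_int (e i) \<cdot>\<^sub>m ?X" .
    have "?X * Mop n P e i = ?X + of_int (e i) \<cdot>\<^sub>m (of_int (e i) \<cdot>\<^sub>m ?X)"
      using Mop_right[where P=P and i=i and e=e, OF X P_carrier[OF i]] XP by simp
    also have "\<dots> = 2 \<cdot>\<^sub>m ?X" by (rule eq_matI) (use X sq_inv[OF e[OF i]] in auto)
    finally show ?thesis .
  qed
  have "?X * mat_prod_list n (map (Mop n P e) [0..<k]) = 2 ^ length [0..<k] \<cdot>\<^sub>m ?X"
    by (rule mpl_right[OF X]) (auto intro: Mop_c step)
  then show ?thesis unfolding eps_op_Mop[of n k P e, symmetric] by simp
qed

lemma mps_def': "mat_prod_set n P I = mat_prod_list n (map P (sorted_list_of_set I))"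
  by (simp add: mat_prod_set_def)

lemma mps_carrier: assumes I: "I \<subseteq> {0..<k}" shows "mat_prod_set n P I \<in> carrier_mat n n"
proof -
  have fin: "finite I" using I finite_subset by auto
  show ?thesis unfolding mps_def' by (rule mpl_carrier) (use I fin P_carrier in auto)
qed

lemma mps_A: assumes I: "I \<subseteq> {0..<k}" shows "A * mat_prod_set n P I = mat_prod_set n P I * A"
proof -
  have fin: "finite I" using I finite_subset by auto
  show ?thesis unfolding mps_def' by (rule mpl_comm[OF A_carrier]) (use I fin P_carrier A_comm in auto)
qed

lemma mps_F:
  assumes I: "I \<subseteq> {0..<k}" and e: "\<And>i. i < k \<Longrightarrow> e i \<in> {1, -1}"
  shows "mat_prod_set n P I * eps_op n k P e = of_int (\<Prod>i\<in>I. e i) \<cdot>\<^sub>m eps_op n k P e"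
proof -
  have fin: "finite I" using I finite_subset by auto
  have "mat_prod_set n P I * eps_op n k P e = (\<Prod>x\<leftarrow>sorted_list_of_set I. (of_int (e x) :: complex)) \<cdot>\<^sub>m eps_op n k P e"
    unfolding mps_def'
  proof (rule mpl_left[OF F_carrier], intro ballI)
    fix x assume "x \<in> set (sorted_list_of_set I)"
    then have x: "x < k" using I fin by auto
    show "P x \<in> carrier_mat n n \<and> P x * eps_op n k P e = of_int (e x) \<cdot>\<^sub>m eps_op n k P e"
      using P_carrier[OF x] P_F[where e=e, OF x e[OF x]] by simp
  qed
  also have "(\<Prod>x\<leftarrow>sorted_list_of_set I. (of_int (e x) :: complex)) = (\<Prod>x\<in>I. of_int (e x))"
    using prod.distinct_set_conv_list[of "sorted_list_of_set I" "\<lambda>x. (of_int (e x) :: complex)"] fin by simp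
  finally show ?thesis by simp
qed

end

context invsys
begin

lemma sgnJ_in: "sgnJ J i \<in> {1, -1}" by (simp add: sgnJ_def)

lemma restr_exists:
  "\<exists>m S B. S \<in> carrier_mat n m \<and> B \<in> carrier_mat m m \<and> inj_mat n m S
     \<and> {S *\<^sub>v x | x. x \<in> carrier_vec m} = eps_space n k P e \<and> A * S = S * B
     \<and> m = vec_space.rank n (eps_op n k P e)"
proof -
  let ?F = "eps_op n k P e"
  have F: "?F \<in> carrier_mat n n" by (rule F_carrier)
  obtain m S where S: "S \<in> carrier_mat n m" and inj: "inj_mat n m S"
    and img: "{S *\<^sub>v x | x. x \<in> carrier_vec m} = {?F *\<^sub>v w | w. w \<in> carrier_vec n}"
    and m: "m = vec_space.rank n ?F"
    using vec_space.basis_exists[OF F] by blast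
  have AF: "A * ?F = ?F * A" by (rule comm_F[OF A_carrier A_comm])
  have "\<exists>x\<in>carrier_vec m. (A * S) *\<^sub>v unit_vec m j = S *\<^sub>v x" if "j < m" for j
  proof -
    have "S *\<^sub>v unit_vec m j \<in> {?F *\<^sub>v w | w. w \<in> carrier_vec n}" unfolding img[symmetric] by auto
    then obtain w where w: "w \<in> carrier_vec n" and Sw: "S *\<^sub>v unit_vec m j = ?F *\<^sub>v w" by auto
    have "(A * S) *\<^sub>v unit_vec m j = A *\<^sub>v (?F *\<^sub>v w)" using A_carrier S Sw by simp
    also have "\<dots> = ?F *\<^sub>v (A *\<^sub>v w)" using A_carrier F w AF by (metis assoc_mult_mat_vec)
    finally have "(A * S) *\<^sub>v unit_vec m j \<in> {?F *\<^sub>v w | w. w \<in> carrier_vec n}" using A_carrier w by auto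
    then show ?thesis unfolding img[symmetric] by auto
  qed
  then obtain B where B: "B \<in> carrier_mat m m" and AS: "A * S = S * B"
    using factor_through[OF S, of "A * S" m] A_carrier S by auto
  show ?thesis
    using S B inj img AS m unfolding eps_space_def by blast
qed

lemma restr_rep_some: "restr_rep n A (eps_space n k P e) (SOME B. restr_rep n A (eps_space n k P e) B)"
proof (rule someI_ex)
  from restr_exists[of e] obtain m S B where "S \<in> carrier_mat n m" "B \<in> carrier_mat m m" "inj_mat n m S"
    "{S *\<^sub>v x | x. x \<in> carrier_vec m} = eps_space n k P e" "A * S = S * B" by blast
  then show "\<exists>B. restr_rep n A (eps_space n k P e) B" unfolding restr_rep_def inj_mat_def by blast
qed

lemma tr_sum:
  assumes X: "X \<in> carrier_mat n n"
  shows "(\<Sum>J\<in>Pow {0..<k}. tr (X * eps_op n k P (sgnJ J))) = 2 ^ k * tr X"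
proof -
  have "(\<Sum>J\<in>Pow {0..<k}. tr (X * eps_op n k P (sgnJ J)))
     = (\<Sum>J\<in>Pow {0..<k}. \<Sum>a\<in>{0..<n}. \<Sum>b\<in>{0..<n}. X $$ (a,b) * eps_op n k P (sgnJ J) $$ (b,a))"
  proof (rule sum.cong[OF refl])
    fix J
    have FJ: "eps_op n k P (sgnJ J) \<in> carrier_mat n n" by (rule F_carrier)
    show "tr (X * eps_op n k P (sgnJ J)) = (\<Sum>a\<in>{0..<n}. \<Sum>b\<in>{0..<n}. X $$ (a,b) * eps_op n k P (sgnJ J) $$ (b,a))"
      using X FJ by (simp add: tr_def scalar_prod_def)
  qed
  also have "\<dots> = (\<Sum>a\<in>{0..<n}. \<Sum>b\<in>{0..<n}. X $$ (a,b) * (\<Sum>J\<in>Pow {0..<k}. eps_op n k P (sgnJ J) $$ (b,a)))"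
    by (simp add: sum_distrib_left sum.swap[of _ "Pow {0..<k}"])
  also have "\<dots> = (\<Sum>a\<in>{0..<n}. \<Sum>b\<in>{0..<n}. X $$ (a,b) * (if b = a then 2 ^ k else 0))"
    by (intro sum.cong refl) (simp add: eps_op_sum P_carrier)
  also have "\<dots> = (\<Sum>a\<in>{0..<n}. \<Sum>b\<in>{0..<n}. if b = a then X $$ (a,a) * 2 ^ k else 0)"
    by (intro sum.cong refl) simp
  also have "\<dots> = (\<Sum>a\<in>{0..<n}. X $$ (a,a) * 2 ^ k)"
    by (intro sum.cong refl) (simp add: sum.delta)
  also have "\<dots> = 2 ^ k * tr X" using X by (simp add: tr_def sum_distrib_left mult.commute)
  finally show ?thesis .
qed


lemma spec_decomp:
  assumes I: "I \<subseteq> {0..<k}"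
  shows "spectrum_mset (mat_prod_set n P I * A) =
    (\<Sum>J\<in>Pow {0..<k}. image_mset (\<lambda>w. of_int (chi I J) * w)
       (spectrum_mset (SOME B. restr_rep n A (eps_space n k P (sgnJ J)) B)))"
proof (rule psum_eq_imp_eq)
  fix j :: nat
  let ?C = "mat_prod_set n P I * A"
  define B where "B J = (SOME B. restr_rep n A (eps_space n k P (sgnJ J)) B)" for J
  have C: "?C \<in> carrier_mat n n" using mps_carrier[OF I] A_carrier by simp
  have Cj: "?C ^\<^sub>m j \<in> carrier_mat n n" using C by simp
  have key: "tr (?C ^\<^sub>m j * eps_op n k P (sgnJ J)) = 2 ^ k * (of_int (chi I J) ^ j * (\<Sum>z\<in>#spectrum_mset (B J). z ^ j))"
    for J
  proof -
    let ?F = "eps_op n k P (sgnJ J)"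
    let ?c = "(of_int (chi I J) :: complex)"
    have F: "?F \<in> carrier_mat n n" by (rule F_carrier)
    from restr_rep_some[of "sgnJ J"] obtain m S where S: "S \<in> carrier_mat n m" and BJ: "B J \<in> carrier_mat m m"
      and inj: "inj_mat n m S" and img: "eps_space n k P (sgnJ J) = {S *\<^sub>v x | x. x \<in> carrier_vec m}"
      and AS: "A * S = S * B J"
      unfolding restr_rep_def B_def inj_mat_def by blast
    have img': "{S *\<^sub>v x | x. x \<in> carrier_vec m} = {?F *\<^sub>v w | w. w \<in> carrier_vec n}"
      using img unfolding eps_space_def by simp
    have PF: "mat_prod_set n P I * ?F = ?c \<cdot>\<^sub>m ?F"
      using mps_F[OF I, of "sgnJ J"] sgnJ_in unfolding chi_def by simp
    have PS: "mat_prod_set n P I * S = ?c \<cdot>\<^sub>m S"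
    proof (rule mat_eq_by_vec)
      show "mat_prod_set n P I * S \<in> carrier_mat n m" "?c \<cdot>\<^sub>m S \<in> carrier_mat n m"
        using mps_carrier[OF I] S by auto
      fix v :: "complex vec" assume v: "v \<in> carrier_vec m"
      have "S *\<^sub>v v \<in> {?F *\<^sub>v w | w. w \<in> carrier_vec n}" unfolding img'[symmetric] using v by auto
      then obtain w where w: "w \<in> carrier_vec n" and Sv: "S *\<^sub>v v = ?F *\<^sub>v w" by auto
      have "(mat_prod_set n P I * S) *\<^sub>v v = mat_prod_set n P I *\<^sub>v (?F *\<^sub>v w)"
        using mps_carrier[OF I] S v Sv by simp
      also have "\<dots> = (mat_prod_set n P I * ?F) *\<^sub>v w" using mps_carrier[OF I] F w by simp
      also have "\<dots> = ?c \<cdot>\<^sub>v (S *\<^sub>v v)" unfolding PF smult_mat_vec[OF F w] Sv ..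
      also have "\<dots> = (?c \<cdot>\<^sub>m S) *\<^sub>v v" unfolding smult_mat_vec[OF S v] ..
      finally show "(mat_prod_set n P I * S) *\<^sub>v v = (?c \<cdot>\<^sub>m S) *\<^sub>v v" .
    qed
    have CS: "?C * S = S * (?c \<cdot>\<^sub>m B J)"
    proof -
      have "?C * S = mat_prod_set n P I * (A * S)" using mps_carrier[OF I] A_carrier S by simp
      also have "\<dots> = (mat_prod_set n P I * S) * B J" unfolding AS using mps_carrier[OF I] S BJ by simp
      also have "\<dots> = ?c \<cdot>\<^sub>m (S * B J)" unfolding PS using S BJ by (simp add: mult_smult_assoc_mat)
      also have "\<dots> = S * (?c \<cdot>\<^sub>m B J)" using S BJ by (simp add: mult_smult_distrib)
      finally show ?thesis .
    qed
    have "tr (?C ^\<^sub>m j * ?F) = 2 ^ k * tr ((?c \<cdot>\<^sub>m B J) ^\<^sub>m j)"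
      by (rule trace_block[OF F FF[OF sgnJ_in] S inj img' C _ CS]) (use BJ in simp)
    also have "tr ((?c \<cdot>\<^sub>m B J) ^\<^sub>m j) = ?c ^ j * tr (B J ^\<^sub>m j)"
      unfolding pow_mat_smult[OF BJ] by (rule tr_smult[of _ m]) (use BJ in simp)
    also have "tr (B J ^\<^sub>m j) = (\<Sum>z\<in>#spectrum_mset (B J). z ^ j)" by (rule tr_pow_spec[OF BJ])
    finally show ?thesis .
  qed
  have "(\<Sum>z\<in>#spectrum_mset ?C. z ^ j) = tr (?C ^\<^sub>m j)" by (rule tr_pow_spec[OF C, symmetric])
  also have "\<dots> = (\<Sum>J\<in>Pow {0..<k}. tr (?C ^\<^sub>m j * eps_op n k P (sgnJ J))) / 2 ^ k"
    using tr_sum[OF Cj] by simp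
  also have "\<dots> = (\<Sum>J\<in>Pow {0..<k}. of_int (chi I J) ^ j * (\<Sum>z\<in>#spectrum_mset (B J). z ^ j))"
    unfolding key sum_distrib_left[symmetric] by (rule nonzero_mult_div_cancel_left) simp
  also have "\<dots> = (\<Sum>J\<in>Pow {0..<k}. \<Sum>z\<in>#spectrum_mset (B J). (of_int (chi I J) * z) ^ j)"
    by (intro sum.cong refl) (simp add: sum_mset_distrib_left power_mult_distrib multiset.map_comp comp_def)
  also have "\<dots> = (\<Sum>z\<in>#(\<Sum>J\<in>Pow {0..<k}. image_mset (\<lambda>w. of_int (chi I J) * w) (spectrum_mset (B J))). z ^ j)"
    unfolding sum_mset_sum_set by (simp add: multiset.map_comp comp_def)
  finally show "(\<Sum>z\<in>#spectrum_mset ?C. z ^ j) =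
    (\<Sum>z\<in>#(\<Sum>J\<in>Pow {0..<k}. image_mset (\<lambda>w. of_int (chi I J) * w)
       (spectrum_mset (SOME B. restr_rep n A (eps_space n k P (sgnJ J)) B))). z ^ j)"
    unfolding B_def .
qed

end

context invsys
begin

lemma main_result:
  assumes spec: "\<And>I. I \<subseteq> {0..<k} \<Longrightarrow> I \<noteq> {} \<Longrightarrow>
                 spectrum_mset A = spectrum_mset (mat_prod_set n P I * A)"
  shows "(\<forall>eps. (\<forall>i<k. eps i \<in> {1, -1}) \<and> (\<exists>i<k. eps i \<noteq> 1) \<longrightarrow>
            pos_roots (proots (restr_char_poly n A (eps_space n k P eps)))
            = image_mset uminus (neg_roots (proots (restr_char_poly n A (eps_space n k P eps)))))
       \<and> (\<exists>S. S \<subseteq># spectrum_mset A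
            \<and> size S = n - col_dim n (eps_op n k P (\<lambda>_. 1))
            \<and> image_mset uminus S = S)"
proof -
  let ?K = "{0..<k}"
  define B where "B J = (SOME B. restr_rep n A (eps_space n k P (sgnJ J)) B)" for J
  define Ms where "Ms J = spectrum_mset (B J)" for J
  have hyp: "(\<Sum>J\<in>Pow ?K. image_mset (\<lambda>w. of_int (chi I J) * w) (Ms J)) = spectrum_mset A"
    if I: "I \<subseteq> ?K" for I
  proof (cases "I = {}")
    case True
    have "mat_prod_set n P {} = 1\<^sub>m n" by (simp add: mat_prod_set_def mpl_Nil)
    then have "spectrum_mset (mat_prod_set n P I * A) = spectrum_mset A" using True A_carrier by simp
    then show ?thesis using spec_decomp[OF I] unfolding Ms_def B_def by simp
  next
    case False
    then show ?thesis using spec_decomp[OF I] spec[OF I False] unfolding Ms_def B_def by simp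
  qed
  have sym: "count (Ms J) z = count (Ms J) (-z)" if "J \<subseteq> ?K" "J \<noteq> {}" for J z
    by (rule fourier[OF _ hyp that]) auto
  have part1: "pos_roots (proots (restr_char_poly n A (eps_space n k P eps)))
            = image_mset uminus (neg_roots (proots (restr_char_poly n A (eps_space n k P eps))))"
    if e1: "\<forall>i<k. eps i \<in> {1, -1}" and e2: "\<exists>i<k. eps i \<noteq> 1" for eps
  proof -
    define J where "J = {i \<in> ?K. eps i = -1}"
    have JK: "J \<subseteq> ?K" unfolding J_def by auto
    have Jne: "J \<noteq> {}" using e1 e2 unfolding J_def by fastforce
    have "eps_op n k P eps = eps_op n k P (sgnJ J)"
      by (rule eps_op_cong) (use e1 in \<open>auto simp: J_def sgnJ_def\<close>)
    then have "eps_space n k P eps = eps_space n k P (sgnJ J)" unfolding eps_space_def by simp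
    then have "proots (restr_char_poly n A (eps_space n k P eps)) = Ms J"
      unfolding restr_char_poly_def Ms_def B_def spectrum_mset_def by simp
    then show ?thesis using symm_pos_neg[OF sym[OF JK Jne]] by simp
  qed
  define S where "S = (\<Sum>J\<in>Pow ?K - {{}}. Ms J)"
  have specA: "spectrum_mset A = Ms {} + S"
  proof -
    have "spectrum_mset A = (\<Sum>J\<in>Pow ?K. Ms J)" using hyp[of "{}"] by (simp add: chi_empty)
    also have "\<dots> = Ms {} + S" unfolding S_def by (rule sum.remove) auto
    finally show ?thesis .
  qed
  have sub: "S \<subseteq># spectrum_mset A" unfolding specA by simp
  have symS: "image_mset uminus S = S"
    unfolding S_def image_mset_sum_set
  proof (intro sum.cong refl symm_image)
    fix J z assume "J \<in> Pow ?K - {{}}"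
    then have "J \<subseteq> ?K" "J \<noteq> {}" by auto
    then show "count (Ms J) z = count (Ms J) (-z)" by (rule sym)
  qed
  have sizeB: "size (Ms J) = dim_row (B J)" for J
  proof -
    from restr_rep_some[of "sgnJ J"] obtain m where "B J \<in> carrier_mat m m"
      unfolding restr_rep_def B_def by blast
    then show ?thesis unfolding Ms_def using size_spec by auto
  qed
  have sizeA: "size (spectrum_mset A) = n" by (rule size_spec[OF A_carrier])
  have F0: "eps_op n k P (\<lambda>_. 1) = eps_op n k P (sgnJ {})" by (rule eps_op_cong) (simp add: sgnJ_def)
  have rank0: "size (Ms {}) = col_dim n (eps_op n k P (\<lambda>_. 1))"
  proof -
    let ?F = "eps_op n k P (sgnJ {})"
    have F: "?F \<in> carrier_mat n n" by (rule F_carrier)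
    have FF0: "?F * ?F = 2 ^ k \<cdot>\<^sub>m ?F" by (rule FF[OF sgnJ_in])
    from restr_exists[of "sgnJ {}"] obtain m0 S0 B0 where S0: "S0 \<in> carrier_mat n m0" and B0: "B0 \<in> carrier_mat m0 m0"
      and inj0: "inj_mat n m0 S0" and img0: "{S0 *\<^sub>v x | x. x \<in> carrier_vec m0} = eps_space n k P (sgnJ {})"
      and AS0: "A * S0 = S0 * B0" and m0: "m0 = vec_space.rank n ?F" by blast
    from restr_rep_some[of "sgnJ {}"] obtain m S1 where S1: "S1 \<in> carrier_mat n m" and B1: "B {} \<in> carrier_mat m m"
      and inj1: "inj_mat n m S1" and img1: "eps_space n k P (sgnJ {}) = {S1 *\<^sub>v x | x. x \<in> carrier_vec m}"
      and AS1: "A * S1 = S1 * B {}"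
      unfolding restr_rep_def B_def inj_mat_def by blast
    have t0: "tr (A ^\<^sub>m 0 * ?F) = 2 ^ k * tr (B0 ^\<^sub>m 0)"
      by (rule trace_block[OF F FF0 S0 inj0 _ A_carrier B0 AS0]) (use img0 in \<open>simp add: eps_space_def\<close>)
    have t1: "tr (A ^\<^sub>m 0 * ?F) = 2 ^ k * tr (B {} ^\<^sub>m 0)"
      by (rule trace_block[OF F FF0 S1 inj1 _ A_carrier B1 AS1]) (use img1 in \<open>simp add: eps_space_def\<close>)
    have "(2 ^ k * of_nat m0 :: complex) = 2 ^ k * of_nat m"
      using t0 t1 B0 B1 by (simp add: tr_one)
    then have "m0 = m" by simp
    then show ?thesis using sizeB[of "{}"] B1 m0 F0 unfolding col_dim_def by simp
  qed
  have "size S = n - col_dim n (eps_op n k P (\<lambda>_. 1))"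
    using sizeA specA rank0 by simp
  then show ?thesis using part1 sub symS by blast
qed

end

theorem proposition4p6:
  fixes k n :: nat and P :: "nat \<Rightarrow> complex mat" and A :: "complex mat"
  assumes k_pos: "k \<ge> 1"
    and P_carrier: "\<And>i. i < k \<Longrightarrow> P i \<in> carrier_mat n n"
    and P_invol: "\<And>i. i < k \<Longrightarrow> P i * P i = 1\<^sub>m n"
    and P_comm: "\<And>i j. i < k \<Longrightarrow> j < k \<Longrightarrow> P i * P j = P j * P i"
    and A_carrier: "A \<in> carrier_mat n n"
    and A_comm: "\<And>i. i < k \<Longrightarrow> A * P i = P i * A"
    and spec: "\<And>I. I \<subseteq> {0..<k} \<Longrightarrow> I \<noteq> {} \<Longrightarrow>
                 spectrum_mset A = spectrum_mset (mat_prod_set n P I * A)"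
  shows "(\<forall>eps. (\<forall>i<k. eps i \<in> {1, -1}) \<and> (\<exists>i<k. eps i \<noteq> 1) \<longrightarrow>
            pos_roots (proots (restr_char_poly n A (eps_space n k P eps)))
            = image_mset uminus (neg_roots (proots (restr_char_poly n A (eps_space n k P eps)))))
       \<and> (\<exists>S. S \<subseteq># spectrum_mset A
            \<and> size S = n - col_dim n (eps_op n k P (\<lambda>_. 1))
            \<and> image_mset uminus S = S)"
proof -
  interpret invsys n k P A
    by (unfold_locales) (use P_carrier P_invol P_comm A_carrier A_comm in auto)
  show ?thesis by (rule main_result[OF spec])
qed


end
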